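(* Let $C$ be an open cone containing no lines, with basepoint $b\in C$. Every horofunction $h$ of the Hilbert geometry on $C$ can be written as $h=r_{C,x}+q$ with $x\in\partial C\setminus\{0\}$ and $q\in A_C(x)$, and this decomposition is unique in the following sense: if $h=r_{C,x}+q_x=r_{C,y}+q_y$ with $x,y\in\partial C\setminus\{0\}$, $q_x\in A_C(x)$, $q_y\in A_C(y)$, then $y$ is a positive multiple of $x$, $r_{C,x}=r_{C,y}$ and $q_x=q_y$.
   Context: $V$ is a finite-dimensional real vector space. An open cone is a nonempty open convex set $T\subset V$ with $\lambda T\subseteq T$ for all $\lambda>0$ and $0\notin T$; $\partial T$ is its boundary. Write $x\le_C y$ iff $y-x\in\overline C$. $M_C(y/x):=\inf\{\lambda>0:y\le_C\lambda x\}$, $F_C(y,x):=\log M_C(y/x)$, $RF_C(x,y):=F_C(y,x)$, $H_C(x,y):=F_C(x,y)+F_C(y,x)$. For $p\in\partial C\setminus\{0\}$, $r_{C,p}(x):=RF_C(x,p)-RF_C(b,p)$. For $d\in\{F_C,H_C\}$: a sequence $(x_n)$ in $C$ converges in the $d$-sense to $g$ if $d(\cdot,x_n)-d(b,x_n)\to g$ pointwise on $C$; a horofunction of $d$ is such a limit not of the form $d(\cdot,p)-d(b,p)$, $p\in C$. $A_C(x)$ is the set of horofunctions of $F_C$ that are Funk-sense limits of sequences in $C$ converging to $x$ in the usual topology of $V$. *)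

theory Defs
  imports "HOL-Analysis.Analysis"
begin

definition open_cone :: "'a::euclidean_space set \<Rightarrow> bool" where
  "open_cone T \<longleftrightarrow> T \<noteq> {} \<and> open T \<and> convex T \<and>
     (\<forall>t>0. \<forall>x\<in>T. t *\<^sub>R x \<in> T) \<and> 0 \<notin> T"

definition contains_no_lines :: "'a::euclidean_space set \<Rightarrow> bool" where
  "contains_no_lines C \<longleftrightarrow> (\<forall>v. v \<in> closure C \<and> - v \<in> closure C \<longrightarrow> v = 0)"

definition cone_le :: "'a::euclidean_space set \<Rightarrow> 'a \<Rightarrow> 'a \<Rightarrow> bool" where
  "cone_le C x y \<longleftrightarrow> y - x \<in> closure C"

definition M_C :: "'a::euclidean_space set \<Rightarrow> 'a \<Rightarrow> 'a \<Rightarrow> real" where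
  "M_C C y x = Inf {t. t > 0 \<and> cone_le C y (t *\<^sub>R x)}"

definition F_C :: "'a::euclidean_space set \<Rightarrow> 'a \<Rightarrow> 'a \<Rightarrow> real" where
  "F_C C y x = ln (M_C C y x)"

definition RF_C :: "'a::euclidean_space set \<Rightarrow> 'a \<Rightarrow> 'a \<Rightarrow> real" where
  "RF_C C x y = F_C C y x"

definition H_C :: "'a::euclidean_space set \<Rightarrow> 'a \<Rightarrow> 'a \<Rightarrow> real" where
  "H_C C x y = F_C C x y + F_C C y x"

definition r_C :: "'a::euclidean_space set \<Rightarrow> 'a \<Rightarrow> 'a \<Rightarrow> 'a \<Rightarrow> real" where
  "r_C C b p x = RF_C C x p - RF_C C b p"

definition d_converges :: "('a \<Rightarrow> 'a \<Rightarrow> real) \<Rightarrow> 'a set \<Rightarrow> 'a \<Rightarrow> (nat \<Rightarrow> 'a) \<Rightarrow> ('a \<Rightarrow> real) \<Rightarrow> bool" where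
  "d_converges d C b xs g \<longleftrightarrow> (\<forall>n. xs n \<in> C) \<and>
     (\<forall>z\<in>C. (\<lambda>n. d z (xs n) - d b (xs n)) \<longlonglongrightarrow> g z)"

definition horofunction :: "('a \<Rightarrow> 'a \<Rightarrow> real) \<Rightarrow> 'a set \<Rightarrow> 'a \<Rightarrow> ('a \<Rightarrow> real) \<Rightarrow> bool" where
  "horofunction d C b g \<longleftrightarrow> (\<exists>xs. d_converges d C b xs g) \<and>
     \<not> (\<exists>p\<in>C. \<forall>z\<in>C. g z = d z p - d b p)"

definition A_C :: "'a::euclidean_space set \<Rightarrow> 'a \<Rightarrow> 'a \<Rightarrow> ('a \<Rightarrow> real) set" where
  "A_C C b x = {q. horofunction (F_C C) C b q \<and>
      (\<exists>xs. d_converges (F_C C) C b xs q \<and> xs \<longlonglongrightarrow> x)}"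

end

theory Submission
  imports Defs
begin

locale cone_ctx =
  fixes C :: "'a::euclidean_space set"
  assumes oc: "open_cone C" and nl: "contains_no_lines C"
begin

abbreviation "K \<equiv> closure C"

lemma C_open: "open C" and C_convex: "convex C" and C_ne: "C \<noteq> {}"
  and C_zero: "0 \<notin> C"
  using oc unfolding open_cone_def by auto

lemma C_scale: "t > 0 \<Longrightarrow> x \<in> C \<Longrightarrow> t *\<^sub>R x \<in> C"
  using oc unfolding open_cone_def by auto

lemma C_add: assumes "x \<in> C" "y \<in> C" shows "x + y \<in> C"
proof -
  have "(1/2) *\<^sub>R x + (1/2) *\<^sub>R y \<in> C"
    using convexD[OF C_convex assms, of "1/2" "1/2"] by simp
  hence "2 *\<^sub>R ((1/2) *\<^sub>R x + (1/2) *\<^sub>R y) \<in> C" by (intro C_scale) auto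
  thus ?thesis by (simp add: scaleR_add_right)
qed

lemma C_sub_K: "C \<subseteq> K" by (rule closure_subset)

lemma K_closed: "closed K" by simp

lemma no_lines: "v \<in> K \<Longrightarrow> - v \<in> K \<Longrightarrow> v = 0"
  using nl unfolding contains_no_lines_def by auto

lemma C_cball: assumes "z \<in> C" obtains r where "r > 0" "cball z r \<subseteq> C"
  using C_open assms open_contains_cball by blast

lemma CK_add: assumes "z \<in> C" "k \<in> K" shows "z + k \<in> C"
proof -
  obtain r where r: "r > 0" "cball z r \<subseteq> C" using C_cball assms(1) by blast
  obtain c where c: "c \<in> C" "dist c k < r" using assms(2) r(1) closure_approachable by blast
  have "z + k - c \<in> cball z r" using c(2) by (simp add: dist_norm norm_minus_commute algebra_simps)
  hence "z + k - c \<in> C" using r by blast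
  hence "(z + k - c) + c \<in> C" using c(1) C_add by blast
  thus ?thesis by simp
qed

lemma K_add: assumes "x \<in> K" "y \<in> K" shows "x + y \<in> K"
proof -
  obtain f where f: "\<And>n. f n \<in> C" "f \<longlonglongrightarrow> x" using assms(1) closure_sequential by blast
  have "\<And>n. f n + y \<in> K" using CK_add f(1) assms(2) C_sub_K by blast
  moreover have "(\<lambda>n. f n + y) \<longlonglongrightarrow> x + y" using f(2) by (intro tendsto_intros)
  ultimately show ?thesis using closed_sequentially[OF K_closed, of "\<lambda>n. f n + y"] by blast
qed

lemma K_scale_pos: assumes "t > 0" "x \<in> K" shows "t *\<^sub>R x \<in> K"
proof -
  obtain f where f: "\<And>n. f n \<in> C" "f \<longlonglongrightarrow> x" using assms(2) closure_sequential by blast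
  have "\<And>n. t *\<^sub>R f n \<in> K" using C_scale f(1) assms(1) C_sub_K by blast
  moreover have "(\<lambda>n. t *\<^sub>R f n) \<longlonglongrightarrow> t *\<^sub>R x" using f(2) by (intro tendsto_intros)
  ultimately show ?thesis using closed_sequentially[OF K_closed, of "\<lambda>n. t *\<^sub>R f n"] by blast
qed

lemma zero_K: "0 \<in> K"
proof -
  obtain c where c: "c \<in> C" using C_ne by blast
  have "(\<lambda>n. inverse (real (Suc n)) *\<^sub>R c) \<longlonglongrightarrow> 0 *\<^sub>R c"
    by (intro tendsto_intros LIMSEQ_inverse_real_of_nat) 
  moreover have "\<And>n. inverse (real (Suc n)) *\<^sub>R c \<in> K" using C_scale c C_sub_K by auto
  ultimately show ?thesis using closed_sequentially[OF K_closed, of "\<lambda>n. inverse (real (Suc n)) *\<^sub>R c"] by simp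
qed

lemma K_scale: assumes "t \<ge> 0" "x \<in> K" shows "t *\<^sub>R x \<in> K"
  using assms K_scale_pos zero_K by (cases "t = 0") auto

lemma frontier_C: "frontier C = K - C"
  using C_open by (simp add: frontier_def interior_open)

abbreviation "M \<equiv> M_C C"

lemma M_eq: "M v w = Inf {t. t > 0 \<and> t *\<^sub>R w - v \<in> K}"
  unfolding M_C_def cone_le_def by simp

lemma S_ne: assumes "w \<in> C" shows "\<exists>t>0. t *\<^sub>R w - v \<in> C"
proof -
  obtain r where r: "r > 0" "cball w r \<subseteq> C" using C_cball assms by blast
  define t where "t = (norm v + 1) / r"
  have "norm v + 1 > 0" by (smt (verit) norm_ge_zero)
  hence t: "t > 0" using r by (simp add: t_def)
  have "norm ((1/t) *\<^sub>R v) = r * norm v / (norm v + 1)"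
    using r(1) t by (simp add: t_def)
  also have "\<dots> \<le> r"
  proof -
    have "r * norm v \<le> r * (norm v + 1)" using r(1) by simp
    moreover have "norm v + 1 > 0" by (smt (verit) norm_ge_zero)
    ultimately show ?thesis by (simp add: pos_divide_le_eq)
  qed
  finally have "norm ((1/t) *\<^sub>R v) \<le> r" .
  hence "w - (1/t) *\<^sub>R v \<in> cball w r" by (simp add: dist_norm)
  hence "t *\<^sub>R (w - (1/t) *\<^sub>R v) \<in> C" using r t C_scale by blast
  thus ?thesis using t by (intro exI[of _ t]) (simp add: scaleR_diff_right)
qed

lemma M_le: assumes "t > 0" "t *\<^sub>R w - v \<in> K" shows "M v w \<le> t"
  unfolding M_eq by (rule cInf_lower) (use assms in \<open>auto intro!: bdd_belowI[of _ 0]\<close>)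

lemma M_greatest: assumes "w \<in> C" "\<And>t. t > 0 \<Longrightarrow> t *\<^sub>R w - v \<in> K \<Longrightarrow> a \<le> t"
  shows "a \<le> M v w"
  unfolding M_eq
proof (rule cInf_greatest)
  show "{t. 0 < t \<and> t *\<^sub>R w - v \<in> K} \<noteq> {}" using S_ne[OF assms(1)] C_sub_K by blast
qed (use assms in auto)

lemma M_nonneg: "w \<in> C \<Longrightarrow> 0 \<le> M v w"
  by (rule M_greatest) auto

lemma M_up: assumes "w \<in> C" "M v w < t" shows "t *\<^sub>R w - v \<in> K"
proof -
  have "\<exists>s\<in>{t. 0 < t \<and> t *\<^sub>R w - v \<in> K}. s < t"
    using assms(2) unfolding M_eq
    by (subst cInf_less_iff[symmetric]) (use S_ne[OF assms(1)] C_sub_K in \<open>auto intro!: bdd_belowI[of _ 0]\<close>)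
  then obtain s where s: "s > 0" "s *\<^sub>R w - v \<in> K" "s < t" by auto
  have "(s *\<^sub>R w - v) + (t - s) *\<^sub>R w \<in> K"
    using K_add K_scale s assms(1) C_sub_K by auto
  thus ?thesis by (simp add: algebra_simps)
qed

lemma M_attain: assumes "w \<in> C" "v \<in> K" "v \<noteq> 0"
  shows "0 < M v w" "M v w *\<^sub>R w - v \<in> K"
proof -
  let ?T = "{t. t *\<^sub>R w - v \<in> K}"
  have pos: "t > 0" if "t *\<^sub>R w - v \<in> K" for t
  proof (rule ccontr)
    assume "\<not> t > 0"
    hence "(- t) *\<^sub>R w \<in> K" using K_scale[of "-t" w] assms(1) C_sub_K by auto
    hence "(t *\<^sub>R w - v) + (- t) *\<^sub>R w \<in> K" using K_add that by blast
    hence "- v \<in> K" by (simp add: algebra_simps)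
    thus False using no_lines assms by blast
  qed
  have eq: "{t. t > 0 \<and> t *\<^sub>R w - v \<in> K} = ?T" using pos by auto
  have cl: "closed ?T"
    using continuous_closed_vimage[OF K_closed, of "\<lambda>t. t *\<^sub>R w - v"]
    by (auto simp: vimage_def intro!: continuous_intros)
  have ne: "?T \<noteq> {}" using S_ne[OF assms(1)] C_sub_K by blast
  have "Inf ?T \<in> ?T"
    by (rule closed_contains_Inf[OF ne _ cl]) (use pos in \<open>auto intro!: bdd_belowI[of _ 0] less_imp_le\<close>)
  hence "M v w \<in> ?T" unfolding M_eq eq .
  thus "M v w *\<^sub>R w - v \<in> K" "0 < M v w" using pos by auto
qed

lemma M_up': assumes "w \<in> C" "v \<in> K" "v \<noteq> 0" "M v w \<le> t" shows "t *\<^sub>R w - v \<in> K"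
proof -
  have "(M v w *\<^sub>R w - v) + (t - M v w) *\<^sub>R w \<in> K"
    using K_add K_scale M_attain[OF assms(1-3)] assms(1,4) C_sub_K by auto
  thus ?thesis by (simp add: algebra_simps)
qed

lemma M_mono: assumes "w \<in> C" "v \<in> K" "v \<noteq> 0" "v' - v \<in> K" shows "M v w \<le> M v' w"
proof -
  have v': "v' \<in> K" using K_add[OF assms(2,4)] by simp
  have "v' \<noteq> 0" using assms no_lines by auto
  hence "(M v' w *\<^sub>R w - v') + (v' - v) \<in> K" using M_attain[OF assms(1) v'] assms K_add by blast
  hence "M v' w *\<^sub>R w - v \<in> K" by simp
  thus ?thesis using M_le M_attain[OF assms(1) v' \<open>v' \<noteq> 0\<close>] by blast
qed

lemma M_le_aff: assumes "w \<in> C" "c > 0"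
  "\<And>s. s > 0 \<Longrightarrow> s *\<^sub>R w - v \<in> K \<Longrightarrow> M v' w' \<le> c * s + d"
  shows "M v' w' \<le> c * M v w + d"
proof -
  have "(M v' w' - d) / c \<le> M v w"
    by (rule M_greatest[OF assms(1)]) (use assms(2,3) in \<open>auto simp: field_simps\<close>)
  thus ?thesis using assms(2) by (simp add: field_simps)
qed

lemma M_scale_num_le: assumes "w \<in> C" "t > 0" shows "M (t *\<^sub>R v) w \<le> t * M v w"
proof -
  have "M (t *\<^sub>R v) w \<le> t * M v w + 0"
  proof (rule M_le_aff[OF assms])
    fix s assume "s > 0" "s *\<^sub>R w - v \<in> K"
    hence "t *\<^sub>R (s *\<^sub>R w - v) \<in> K" using K_scale assms(2) by auto
    thus "M (t *\<^sub>R v) w \<le> t * s + 0" using M_le \<open>s > 0\<close> assms(2)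
      by (simp add: algebra_simps)
  qed
  thus ?thesis by simp
qed

lemma M_scale_num: assumes "w \<in> C" "t > 0" shows "M (t *\<^sub>R v) w = t * M v w"
proof -
  have "M ((1/t) *\<^sub>R (t *\<^sub>R v)) w \<le> (1/t) * M (t *\<^sub>R v) w"
    using M_scale_num_le[OF assms(1), where t="1/t" and v="t *\<^sub>R v"] assms(2) by simp
  hence "t * M v w \<le> M (t *\<^sub>R v) w" using assms(2) by (simp add: field_simps)
  thus ?thesis using M_scale_num_le[OF assms, where v=v] by linarith
qed

lemma M_scale_den_le: assumes "w \<in> C" "t > 0" shows "M v (t *\<^sub>R w) \<le> (1/t) * M v w"
proof -
  have "M v (t *\<^sub>R w) \<le> (1/t) * M v w + 0"
  proof (rule M_le_aff[OF assms(1)])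
    fix s assume "s > 0" "s *\<^sub>R w - v \<in> K"
    thus "M v (t *\<^sub>R w) \<le> (1/t) * s + 0" using M_le[of "s/t" "t *\<^sub>R w" v] assms(2)
      by simp
  qed (use assms in simp)
  thus ?thesis by simp
qed

lemma M_scale_den: assumes "w \<in> C" "t > 0" shows "M v (t *\<^sub>R w) = M v w / t"
proof -
  have tw: "t *\<^sub>R w \<in> C" using C_scale assms by blast
  have "M v ((1/t) *\<^sub>R (t *\<^sub>R w)) \<le> (1/(1/t)) * M v (t *\<^sub>R w)"
    using M_scale_den_le[OF tw, where t="1/t" and v=v] assms(2) by simp
  hence "M v w / t \<le> M v (t *\<^sub>R w)" using assms(2) by (simp add: field_simps)
  moreover have "M v (t *\<^sub>R w) \<le> M v w / t" using M_scale_den_le[OF assms, where v=v] by simp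
  ultimately show ?thesis by linarith
qed

lemma M_lip: assumes "w \<in> C" "r > 0" "cball w r \<subseteq> C"
  shows "M v' w \<le> M v w + norm (v' - v) / r"
proof (cases "v' = v")
  case True thus ?thesis by simp
next
  case False
  define d where "d = norm (v' - v) / r"
  have d: "d > 0" using False assms(2) by (simp add: d_def)
  have "w - (1/d) *\<^sub>R (v' - v) \<in> cball w r"
    using d assms(2) by (simp add: dist_norm d_def)
  hence "w - (1/d) *\<^sub>R (v' - v) \<in> K" using assms(3) C_sub_K by blast
  hence "d *\<^sub>R (w - (1/d) *\<^sub>R (v' - v)) \<in> K" using K_scale d by auto
  hence dk: "d *\<^sub>R w - (v' - v) \<in> K" using d by (simp add: scaleR_diff_right)
  have "M v' w \<le> 1 * M v w + d"
  proof (rule M_le_aff[OF assms(1)])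
    fix s assume s: "s > 0" "s *\<^sub>R w - v \<in> K"
    have "(s *\<^sub>R w - v) + (d *\<^sub>R w - (v' - v)) \<in> K" using K_add s dk by blast
    hence "(s + d) *\<^sub>R w - v' \<in> K" by (simp add: algebra_simps)
    thus "M v' w \<le> 1 * s + d" using M_le s d by simp
  qed simp
  thus ?thesis by (simp add: d_def)
qed

lemma M_cont_num: assumes "w \<in> C" shows "continuous_on UNIV (\<lambda>v. M v w)"
proof -
  obtain r where r: "r > 0" "cball w r \<subseteq> C" using C_cball assms by blast
  show ?thesis unfolding continuous_on_iff
  proof (intro ballI allI impI)
    fix v :: 'a and e :: real assume "v \<in> UNIV" "e > 0"
    show "\<exists>d>0. \<forall>v'\<in>UNIV. dist v' v < d \<longrightarrow> dist (M v' w) (M v w) < e"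
    proof (intro exI[of _ "e * r"] conjI ballI impI)
      fix v' assume "dist v' v < e * r"
      hence n: "norm (v' - v) / r < e" "norm (v - v') / r < e" using r(1)
        by (auto simp: dist_norm field_simps norm_minus_commute)
      show "dist (M v' w) (M v w) < e"
        using M_lip[OF assms r, of v' v] M_lip[OF assms r, of v v'] n by (simp add: dist_real_def abs_less_iff)
    qed (use r \<open>e > 0\<close> in simp)
  qed
qed

lemma M_den_bounds: assumes "w \<in> C" "r > 0" "cball w r \<subseteq> C" "0 < e" "e < 1" "norm (w' - w) < e * r"
  shows "M v w' \<le> M v w / (1 - e)" "M v w \<le> M v w' / (1 - e)" "w' \<in> C"
proof -
  have "norm ((1/e) *\<^sub>R (w' - w)) = norm (w' - w) / e" using assms(4) by simp
  also have "\<dots> \<le> r" using assms(4,6) by (simp add: pos_divide_le_eq mult.commute)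
  finally have "w + (1/e) *\<^sub>R (w' - w) \<in> cball w r" by (simp add: dist_norm)
  hence "e *\<^sub>R (w + (1/e) *\<^sub>R (w' - w)) \<in> C" using assms(3,4) C_scale by blast
  hence A: "w' - (1 - e) *\<^sub>R w \<in> C" using assms(4) by (simp add: algebra_simps)
  have "w' = (w' - (1 - e) *\<^sub>R w) + (1 - e) *\<^sub>R w" by simp
  moreover have "(1 - e) *\<^sub>R w \<in> K" using K_scale assms(1,5) C_sub_K by auto
  ultimately show w': "w' \<in> C" using CK_add[OF A] by metis
  have "norm (((1 - e) / e) *\<^sub>R (w - w')) \<le> r"
  proof -
    have "norm (((1 - e) / e) *\<^sub>R (w - w')) = ((1-e)/e) * norm (w' - w)"
      using assms(4,5) by (simp add: norm_minus_commute)
    also have "\<dots> \<le> (1/e) * norm (w' - w)" using assms(4,5) by (intro mult_right_mono) (auto simp: field_simps)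
    also have "\<dots> \<le> r" using assms(4,6) by (simp add: field_simps)
    finally show ?thesis .
  qed
  hence "w + ((1 - e) / e) *\<^sub>R (w - w') \<in> cball w r" by (simp add: dist_norm)
  hence "e *\<^sub>R (w + ((1 - e) / e) *\<^sub>R (w - w')) \<in> C" using assms(3,4) C_scale by blast
  moreover have "e *\<^sub>R (w + ((1 - e) / e) *\<^sub>R (w - w')) = w - (1 - e) *\<^sub>R w'"
  proof -
    have "e * ((1 - e) / e) = 1 - e" using assms(4) by simp
    hence "e *\<^sub>R (w + ((1 - e) / e) *\<^sub>R (w - w')) = e *\<^sub>R w + (1 - e) *\<^sub>R (w - w')"
      by (simp add: scaleR_add_right)
    thus ?thesis by (simp add: algebra_simps)
  qed
  ultimately have B: "w - (1 - e) *\<^sub>R w' \<in> C" by simp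
  show "M v w' \<le> M v w / (1 - e)"
  proof -
    have "M v w' \<le> (1/(1-e)) * M v w + 0"
    proof (rule M_le_aff[OF assms(1)])
      fix s assume s: "s > 0" "s *\<^sub>R w - v \<in> K"
      have "(s/(1-e)) *\<^sub>R (w' - (1 - e) *\<^sub>R w) \<in> K" using A C_sub_K K_scale s assms(5) by auto
      hence "(s/(1-e)) *\<^sub>R (w' - (1 - e) *\<^sub>R w) + (s *\<^sub>R w - v) \<in> K" using K_add s by blast
      moreover have "(s/(1-e)) *\<^sub>R (w' - (1 - e) *\<^sub>R w) + (s *\<^sub>R w - v) = (s/(1-e)) *\<^sub>R w' - v"
      proof -
        have "(s/(1-e)) * (1 - e) = s" using assms(5) by simp
        thus ?thesis by (simp add: scaleR_diff_right)
      qed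
      ultimately have "(s/(1-e)) *\<^sub>R w' - v \<in> K" by simp
      thus "M v w' \<le> (1/(1-e)) * s + 0" using M_le[of "s/(1-e)"] s assms(5) by simp
    qed (use assms in simp)
    thus ?thesis by simp
  qed
  show "M v w \<le> M v w' / (1 - e)"
  proof -
    have "M v w \<le> (1/(1-e)) * M v w' + 0"
    proof (rule M_le_aff[OF w'])
      fix s assume s: "s > 0" "s *\<^sub>R w' - v \<in> K"
      have "(s/(1-e)) *\<^sub>R (w - (1 - e) *\<^sub>R w') \<in> K" using B C_sub_K K_scale s assms(5) by auto
      hence "(s/(1-e)) *\<^sub>R (w - (1 - e) *\<^sub>R w') + (s *\<^sub>R w' - v) \<in> K" using K_add s by blast
      moreover have "(s/(1-e)) *\<^sub>R (w - (1 - e) *\<^sub>R w') + (s *\<^sub>R w' - v) = (s/(1-e)) *\<^sub>R w - v"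
      proof -
        have "(s/(1-e)) * (1 - e) = s" using assms(5) by simp
        thus ?thesis by (simp add: scaleR_diff_right)
      qed
      ultimately have "(s/(1-e)) *\<^sub>R w - v \<in> K" by simp
      thus "M v w \<le> (1/(1-e)) * s + 0" using M_le[of "s/(1-e)"] s assms(5) by simp
    qed (use assms in simp)
    thus ?thesis by simp
  qed
qed

lemma M_cont_den: "continuous_on C (\<lambda>w. M v w)"
  unfolding continuous_on_iff
proof (intro ballI allI impI)
  fix w :: 'a and e :: real assume w: "w \<in> C" and e: "e > 0"
  obtain r where r: "r > 0" "cball w r \<subseteq> C" using C_cball w by blast
  define m where "m = M v w"
  have m0: "m \<ge> 0" using M_nonneg w by (simp add: m_def)
  define eps where "eps = min (1/2) (e / (2 * m + 2))"
  have "e / (2 * m + 2) > 0" using e m0 by simp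
  hence eps1: "eps > 0" by (simp add: eps_def)
  have eps2: "eps \<le> 1/2" unfolding eps_def by (rule min.cobounded1)
  have eps3: "eps \<le> e / (2 * m + 2)" unfolding eps_def by (rule min.cobounded2)
  note eps = eps1 eps2 eps3
  show "\<exists>d>0. \<forall>w'\<in>C. dist w' w < d \<longrightarrow> dist (M v w') (M v w) < e"
  proof (intro exI[of _ "eps * r"] conjI ballI impI)
    show "eps * r > 0" using eps r by simp
    fix w' assume "w' \<in> C" "dist w' w < eps * r"
    hence n: "norm (w' - w) < eps * r" by (simp add: dist_norm)
    have b1: "M v w' \<le> m / (1 - eps)" and b2: "m \<le> M v w' / (1 - eps)"
      using M_den_bounds(1,2)[OF w r(1,2) eps(1) _ n, of v] eps(2) by (auto simp: m_def)
    have le1: "1 - eps > 0" using eps by simp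
    have "M v w' * (1 - eps) \<le> m" using b1 le1 by (simp add: le_divide_eq)
    hence u: "M v w' - m \<le> eps * M v w'" by (simp add: algebra_simps)
    have "m * (1 - eps) \<le> M v w'" using b2 le1 by (simp add: le_divide_eq)
    hence l: "m - M v w' \<le> eps * m" by (simp add: algebra_simps)
    have "m / (1 - eps) \<le> m / (1/2)" using eps(2) m0 le1 by (intro divide_left_mono) auto
    hence "M v w' \<le> 2 * m" using b1 by simp
    hence "eps * M v w' \<le> eps * (2 * m)" using eps by (simp add: mult_left_mono)
    also have "\<dots> \<le> e / (2 * m + 2) * (2 * m)" using eps(3) m0 by (intro mult_right_mono) auto
    also have "\<dots> < e" using e m0 mult_nonneg_nonneg[of e m] by (simp add: field_simps)
    finally have A: "M v w' - m < e" using u by linarith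
    have "eps * m \<le> e / (2 * m + 2) * m" using eps(3) m0 by (intro mult_right_mono) auto
    also have "\<dots> < e" using e m0 by (simp add: field_simps) (use mult_nonneg_nonneg[of e m] e m0 in linarith)
    finally have B: "m - M v w' < e" using l by linarith
    show "dist (M v w') (M v w) < e" using A B by (simp add: dist_real_def m_def abs_less_iff)
  qed
qed

abbreviation "F \<equiv> F_C C"

lemma F_eq: "F v w = ln (M v w)" by (simp add: F_C_def)

lemma funk_mono:
  assumes ws: "\<And>n. ws n \<in> C" and b: "b \<in> C"
    and lim: "\<And>z. z \<in> C \<Longrightarrow> (\<lambda>n. F z (ws n) - F b (ws n)) \<longlonglongrightarrow> q z"
    and z: "z \<in> C" "z' \<in> C" "z' - z \<in> K"
  shows "q z \<le> q z'"
proof (rule tendsto_le[OF trivial_limit_sequentially lim[OF z(2)] lim[OF z(1)]])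
  show "\<forall>\<^sub>F n in sequentially. F z (ws n) - F b (ws n) \<le> F z' (ws n) - F b (ws n)"
  proof (intro always_eventually allI)
    fix n
    have zK: "z \<in> K" "z \<noteq> 0" using z C_sub_K C_zero by auto
    have "M z (ws n) \<le> M z' (ws n)" using M_mono[OF ws zK z(3)] .
    moreover have "0 < M z (ws n)" using M_attain[OF ws zK] by simp
    ultimately show "F z (ws n) - F b (ws n) \<le> F z' (ws n) - F b (ws n)" by (simp add: F_eq)
  qed
qed

lemma eventually_M_large:
  assumes x: "x \<in> K" "x \<notin> C" and ws: "\<And>n. ws n \<in> C" "ws \<longlonglongrightarrow> x"
    and z: "z \<in> C" and T: "T > 0"
  shows "\<forall>\<^sub>F n in sequentially. T \<le> M z (ws n)"
proof -
  let ?U = "- ((\<lambda>w. T *\<^sub>R w - z) -` K)"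
  have "closed ((\<lambda>w. T *\<^sub>R w - z) -` K)"
    by (rule continuous_closed_vimage[OF K_closed]) (intro continuous_intros)
  hence op: "open ?U" by auto
  have "x \<in> ?U"
  proof
    assume "x \<in> (\<lambda>w. T *\<^sub>R w - z) -` K"
    hence k: "T *\<^sub>R x - z \<in> K" by simp
    have "z + (T *\<^sub>R x - z) \<in> C" using CK_add[OF z k] .
    from C_scale[OF _ this, of "1/T"] T have "(1/T) *\<^sub>R (T *\<^sub>R x) \<in> C" by simp
    thus False using x T by simp
  qed
  from topological_tendstoD[OF ws(2) op this]
  show ?thesis
  proof (rule eventually_mono)
    fix n assume "ws n \<in> ?U"
    thus "T \<le> M z (ws n)" using M_up[OF ws(1)] by (meson ComplD not_le vimageI)
  qed
qed

lemma funk_invariant: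
  assumes x: "x \<in> K" "x \<notin> C" and ws: "\<And>n. ws n \<in> C" "ws \<longlonglongrightarrow> x" and b: "b \<in> C"
    and lim: "\<And>z. z \<in> C \<Longrightarrow> (\<lambda>n. F z (ws n) - F b (ws n)) \<longlonglongrightarrow> q z"
    and z: "z \<in> C" and s: "s \<ge> 0"
  shows "q (z + s *\<^sub>R x) \<le> q z"
proof -
  define z' where "z' = z + s *\<^sub>R x"
  have z': "z' \<in> C" using CK_add[OF z] K_scale[OF s x(1)] by (simp add: z'_def)
  have L: "(\<lambda>n. F z' (ws n) - F z (ws n)) \<longlonglongrightarrow> q z' - q z"
    using tendsto_diff[OF lim[OF z'] lim[OF z]] by simp
  obtain r where r: "r > 0" "cball z r \<subseteq> C" using C_cball z by blast
  have zK: "z \<in> K" "z \<noteq> 0" using z C_sub_K C_zero by auto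
  have z'K: "z' \<in> K" "z' \<noteq> 0" using z' C_sub_K C_zero by auto
  have "q z' - q z \<le> 0 + eps" if eps: "eps > 0" for eps
  proof -
    define del where "del = eps * r / (2 * (s + 1))"
    have del: "del > 0" using eps r s by (simp add: del_def)
    define T where "T = 2 * (s + 1) / eps"
    have T: "T > 0" using eps s by (simp add: T_def)
    have ev1: "\<forall>\<^sub>F n in sequentially. dist (ws n) x < del"
      using ws(2) del by (simp add: tendsto_iff)
    have ev2: "\<forall>\<^sub>F n in sequentially. T \<le> M z (ws n)"
      by (rule eventually_M_large[OF x ws z T])
    have "\<forall>\<^sub>F n in sequentially. F z' (ws n) - F z (ws n) \<le> ln (1 + eps)"
      using ev1 ev2
    proof eventually_elim
      case (elim n)
      define w where "w = ws n"
      define m where "m = M z w"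
      have w: "w \<in> C" using ws(1) by (simp add: w_def)
      have m: "m > 0" "m *\<^sub>R w - z \<in> K" using M_attain[OF w zK] by (auto simp: m_def)
      have dn: "norm (x - w) < del" using elim(1) by (simp add: w_def dist_norm norm_minus_commute)
      have "norm ((r / del) *\<^sub>R (x - w)) = (r / del) * norm (x - w)" using del r(1) by simp
      also have "\<dots> \<le> (r / del) * del" using dn del r(1) by (intro mult_left_mono) auto
      also have "\<dots> = r" using del by simp
      finally have "z - (r / del) *\<^sub>R (x - w) \<in> cball z r"
        by (simp add: dist_norm)
      hence "z - (r / del) *\<^sub>R (x - w) \<in> K" using r(2) C_sub_K by blast
      hence "(del / r) *\<^sub>R (z - (r / del) *\<^sub>R (x - w)) \<in> K" using K_scale del r(1) by auto
      hence k1: "(del / r) *\<^sub>R z - (x - w) \<in> K" using del r(1) by (simp add: scaleR_diff_right)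
      define t where "t = m * (1 + s * del / r) + s"
      have "(m *\<^sub>R w - z) + (s * del / r) *\<^sub>R (m *\<^sub>R w - z) + s *\<^sub>R ((del / r) *\<^sub>R z - (x - w)) \<in> K"
        using K_add K_scale m(2) k1 s del r(1) by simp
      moreover have "(m *\<^sub>R w - z) + (s * del / r) *\<^sub>R (m *\<^sub>R w - z) + s *\<^sub>R ((del / r) *\<^sub>R z - (x - w))
          = t *\<^sub>R w - z'"
        by (simp add: t_def z'_def algebra_simps)
      ultimately have tk: "t *\<^sub>R w - z' \<in> K" by simp
      have tpos: "t > 0" using m s del r(1) by (simp add: t_def add_pos_nonneg)
      have Mz': "M z' w \<le> t" using M_le[OF tpos tk] .
      have "2 * s + 2 > 0" "s + 1 > 0" using s by auto
      hence "(s + 1) * del = eps * r / 2" by (simp add: del_def field_simps)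
      moreover have "s * del \<le> (s + 1) * del" using del by (simp add: distrib_right)
      ultimately have "s * del \<le> eps / 2 * r" by linarith
      hence "s * del / r \<le> eps / 2" using r(1) by (simp add: pos_divide_le_eq)
      hence "m * (s * del / r) \<le> m * (eps / 2)" by (rule mult_left_mono) (use m(1) in auto)
      moreover have "s \<le> m * (eps / 2)"
      proof -
        have "T \<le> m" using elim(2) by (simp add: m_def w_def)
        hence "T * (eps / 2) \<le> m * (eps / 2)" using eps by (simp add: mult_right_mono)
        moreover have "T * (eps / 2) = s + 1" using eps by (simp add: T_def)
        ultimately show ?thesis by linarith
      qed
      moreover have "t = m + m * (s * del / r) + s" by (simp add: t_def algebra_simps)
      ultimately have "t \<le> m + m * (eps / 2) + m * (eps / 2)" by linarith
      hence "t \<le> (1 + eps) * m" by (simp add: algebra_simps)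
      hence "M z' w \<le> (1 + eps) * m" using Mz' by linarith
      moreover have "M z' w > 0" using M_attain[OF w z'K] by simp
      ultimately have "ln (M z' w) \<le> ln ((1 + eps) * m)" using m(1) eps by simp
      also have "\<dots> = ln (1 + eps) + ln m" using m(1) eps by (simp add: ln_mult)
      finally show ?case by (simp add: F_eq w_def m_def)
    qed
    hence "q z' - q z \<le> ln (1 + eps)"
      by (rule tendsto_upperbound[OF L _ trivial_limit_sequentially])
    also have "\<dots> \<le> eps" using eps by (simp add: ln_add_one_self_le_self)
    finally show ?thesis by simp
  qed
  hence "q z' - q z \<le> 0" by (rule field_le_epsilon)
  thus ?thesis by (simp add: z'_def)
qed

lemma unique_dir:
  assumes b: "b \<in> C" and x: "x \<in> K" "x \<notin> C" and x0: "x \<noteq> 0"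
    and y: "y \<in> K" "y \<noteq> 0"
    and wx: "\<And>n. wx n \<in> C" "wx \<longlonglongrightarrow> x"
    and qxl: "\<And>z. z \<in> C \<Longrightarrow> (\<lambda>n. F z (wx n) - F b (wx n)) \<longlonglongrightarrow> qx z"
    and wy: "\<And>n. wy n \<in> C"
    and qyl: "\<And>z. z \<in> C \<Longrightarrow> (\<lambda>n. F z (wy n) - F b (wy n)) \<longlonglongrightarrow> qy z"
    and eq: "\<And>z. z \<in> C \<Longrightarrow> F x z - F x b + qx z = F y z - F y b + qy z"
  shows "exp (qx b - qy b - F x b + F y b) *\<^sub>R x - y \<in> K"
proof -
  define k0 where "k0 = qx b - qy b - F x b + F y b"
  define e where "e = exp k0"
  have e: "e > 0" by (simp add: e_def)
  have key: "(e / s) *\<^sub>R b + (e *\<^sub>R x - y) \<in> K" if s: "s > 0" for s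
  proof -
    define w where "w = b + s *\<^sub>R x"
    have sxK: "s *\<^sub>R x \<in> K" using K_scale s x(1) by simp
    have w: "w \<in> C" using CK_add[OF b sxK] by (simp add: w_def)
    have qxw: "qx w \<le> qx b" using funk_invariant[OF x wx b qxl b, of s] s by (simp add: w_def)
    have qyw: "qy b \<le> qy w" using funk_mono[OF wy b qyl b w] sxK by (simp add: w_def)
    have "(1/s) *\<^sub>R w - x = (1/s) *\<^sub>R b" using s by (simp add: w_def scaleR_add_right)
    hence "(1/s) *\<^sub>R w - x \<in> K" using K_scale b C_sub_K s by auto
    hence Mxw: "M x w \<le> 1/s" using M_le s by simp
    have Mxw0: "M x w > 0" using M_attain[OF w x(1) x0] by simp
    have "ln (M x w) \<le> ln (1/s)" using Mxw Mxw0 s by simp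
    moreover have "ln (1/s) = - ln s" using s by (simp add: ln_div)
    ultimately have Fxw: "F x w \<le> - ln s" by (simp add: F_eq)
    have "F y w = F x w - F x b + qx w + F y b - qy w" using eq[OF w] by simp
    also have "\<dots> \<le> - ln s + k0" using Fxw qxw qyw by (simp add: k0_def)
    finally have "ln (M y w) \<le> - ln s + k0" by (simp add: F_eq)
    moreover have My0: "M y w > 0" using M_attain[OF w y] by simp
    ultimately have "M y w \<le> exp (- ln s + k0)" by (metis exp_le_cancel_iff exp_ln)
    moreover have "exp (- ln s + k0) = e / s" using s
      by (simp add: e_def exp_diff)
    ultimately have "M y w \<le> e / s" by simp
    hence "(e / s) *\<^sub>R w - y \<in> K" using M_up'[OF w y] by simp
    moreover have "(e / s) *\<^sub>R w - y = (e / s) *\<^sub>R b + (e *\<^sub>R x - y)"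
      using s by (simp add: w_def scaleR_add_right)
    ultimately show ?thesis by simp
  qed
  have "(\<lambda>n. (e / real (Suc n)) *\<^sub>R b + (e *\<^sub>R x - y)) \<longlonglongrightarrow> (0::real) *\<^sub>R b + (e *\<^sub>R x - y)"
  proof -
    have "(\<lambda>n. e / real (Suc n)) \<longlonglongrightarrow> 0"
      using tendsto_mult[OF tendsto_const LIMSEQ_inverse_real_of_nat, of e] by (simp add: divide_inverse)
    thus ?thesis by (intro tendsto_intros)
  qed
  hence "(\<lambda>n. (e / real (Suc n)) *\<^sub>R b + (e *\<^sub>R x - y)) \<longlonglongrightarrow> e *\<^sub>R x - y" by simp
  moreover have "\<And>n. (e / real (Suc n)) *\<^sub>R b + (e *\<^sub>R x - y) \<in> K" using key by simp
  ultimately have "e *\<^sub>R x - y \<in> K"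
    using closed_sequentially[OF K_closed, of "\<lambda>n. (e / real (Suc n)) *\<^sub>R b + (e *\<^sub>R x - y)"] by blast
  thus ?thesis by (simp add: e_def k0_def)
qed

lemma H_scale: assumes "z \<in> C" "w \<in> C" "t > 0" shows "H_C C z (t *\<^sub>R w) = H_C C z w"
proof -
  have zK: "z \<in> K" "z \<noteq> 0" and wK: "w \<in> K" "w \<noteq> 0" using assms C_sub_K C_zero by auto
  have a: "M z w > 0" using M_attain[OF assms(2) zK] by simp
  have c: "M w z > 0" using M_attain[OF assms(1) wK] by simp
  have "H_C C z (t *\<^sub>R w) = ln (M z w / t) + ln (t * M w z)"
    unfolding H_C_def F_eq using M_scale_den[OF assms(2,3)] M_scale_num[OF assms(1,3)] by simp
  also have "\<dots> = ln (M z w) + ln (M w z)" using a c assms(3) by (simp add: ln_div ln_mult)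
  finally show ?thesis by (simp add: H_C_def F_eq)
qed

lemma F_lim_den: assumes "z \<in> C" "y \<in> C" "\<And>n. v n \<in> C" "v \<longlonglongrightarrow> y"
  shows "(\<lambda>n. F z (v n)) \<longlonglongrightarrow> F z y"
proof -
  have zK: "z \<in> K" "z \<noteq> 0" using assms C_sub_K C_zero by auto
  have "(\<lambda>n. M z (v n)) \<longlonglongrightarrow> M z y"
    by (rule continuous_on_tendsto_compose[OF M_cont_den assms(4,2)]) (use assms(3) in simp)
  moreover have "M z y \<noteq> 0" using M_attain[OF assms(2) zK] by simp
  ultimately show ?thesis unfolding F_eq by (rule tendsto_ln)
qed

lemma F_lim_num: assumes "z \<in> C" "y \<in> K" "y \<noteq> 0" "v \<longlonglongrightarrow> y"
  shows "(\<lambda>n. F (v n) z) \<longlonglongrightarrow> F y z"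
proof -
  have "(\<lambda>n. M (v n) z) \<longlonglongrightarrow> M y z"
    by (rule continuous_on_tendsto_compose[OF M_cont_num[OF assms(1)] assms(4)]) auto
  moreover have "M y z \<noteq> 0" using M_attain[OF assms(1-3)] by simp
  ultimately show ?thesis unfolding F_eq by (rule tendsto_ln)
qed

end

theorem mainTheorem10:
  fixes C :: "'a::euclidean_space set" and b :: 'a and h :: "'a \<Rightarrow> real"
  assumes "open_cone C" and "contains_no_lines C" and "b \<in> C"
    and "horofunction (H_C C) C b h"
  shows "(\<exists>x \<in> frontier C - {0}. \<exists>q \<in> A_C C b x. \<forall>z\<in>C. h z = r_C C b x z + q z)
    \<and> (\<forall>x y qx qy. x \<in> frontier C - {0} \<longrightarrow> y \<in> frontier C - {0} \<longrightarrow>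
          qx \<in> A_C C b x \<longrightarrow> qy \<in> A_C C b y \<longrightarrow>
          (\<forall>z\<in>C. h z = r_C C b x z + qx z) \<longrightarrow> (\<forall>z\<in>C. h z = r_C C b y z + qy z) \<longrightarrow>
          (\<exists>t>0. y = t *\<^sub>R x) \<and> (\<forall>z\<in>C. r_C C b x z = r_C C b y z) \<and> (\<forall>z\<in>C. qx z = qy z))"
proof -
  interpret cone_ctx C using assms(1,2) by unfold_locales
  note b = assms(3)
  have rC: "r_C C b p z = F_C C p z - F_C C p b" for p z
    by (simp add: r_C_def RF_C_def)
  have part1: "\<exists>x \<in> frontier C - {0}. \<exists>q \<in> A_C C b x. \<forall>z\<in>C. h z = r_C C b x z + q z"
  proof -
    from assms(4) obtain xs where xsC: "\<And>n. xs n \<in> C"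
      and xsH: "\<And>z. z \<in> C \<Longrightarrow> (\<lambda>n. H_C C z (xs n) - H_C C b (xs n)) \<longlonglongrightarrow> h z"
      and nint: "\<not> (\<exists>p\<in>C. \<forall>z\<in>C. h z = H_C C z p - H_C C b p)"
      unfolding horofunction_def d_converges_def by blast
    define u where "u n = (1 / norm (xs n)) *\<^sub>R xs n" for n
    have xs0: "xs n \<noteq> 0" for n using xsC C_zero by metis
    have uC: "u n \<in> C" for n using C_scale[OF _ xsC] xs0 by (simp add: u_def)
    have un: "norm (u n) = 1" for n using xs0 by (simp add: u_def)
    have uH: "(\<lambda>n. H_C C z (u n) - H_C C b (u n)) \<longlonglongrightarrow> h z" if z: "z \<in> C" for z
    proof -
      have "H_C C z (u n) - H_C C b (u n) = H_C C z (xs n) - H_C C b (xs n)" for n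
        using H_scale[OF z xsC, of "1 / norm (xs n)" n] H_scale[OF b xsC, of "1 / norm (xs n)" n] xs0
        by (simp add: u_def)
      thus ?thesis using xsH[OF z] by simp
    qed
    have cpt: "compact (sphere (0::'a) 1 \<inter> closure C)"
      by (intro compact_Int_closed compact_sphere) simp
    have "\<forall>n. u n \<in> sphere 0 1 \<inter> closure C" using uC un C_sub_K by auto
    then obtain y \<phi> where y: "y \<in> sphere 0 1 \<inter> closure C" and \<phi>: "strict_mono \<phi>"
      and ulim: "(u \<circ> \<phi>) \<longlonglongrightarrow> y"
      using compact_imp_seq_compact[OF cpt] unfolding seq_compact_def by metis
    define v where "v = u \<circ> \<phi>"
    have vC: "\<And>n. v n \<in> C" using uC by (simp add: v_def)
    have vlim: "v \<longlonglongrightarrow> y" using ulim by (simp add: v_def)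
    have vH: "(\<lambda>n. H_C C z (v n) - H_C C b (v n)) \<longlonglongrightarrow> h z" if z: "z \<in> C" for z
      using LIMSEQ_subseq_LIMSEQ[OF uH[OF z] \<phi>] by (simp add: v_def o_def)
    have yK: "y \<in> closure C" and y0: "y \<noteq> 0" using y by auto
    have yC: "y \<notin> C"
    proof
      assume yC: "y \<in> C"
      have "h z = H_C C z y - H_C C b y" if z: "z \<in> C" for z
      proof -
        have "(\<lambda>n. H_C C z (v n) - H_C C b (v n)) \<longlonglongrightarrow> H_C C z y - H_C C b y"
          unfolding H_C_def
          by (intro tendsto_intros F_lim_den[OF z yC vC vlim] F_lim_den[OF b yC vC vlim]
              F_lim_num[OF z yK y0 vlim] F_lim_num[OF b yK y0 vlim])
        thus ?thesis using vH[OF z] LIMSEQ_unique by blast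
      qed
      thus False using nint yC by blast
    qed
    have yfr: "y \<in> frontier C - {0}" using yK yC y0 frontier_C by auto
    define q where "q z = h z - r_C C b y z" for z
    have qlim: "(\<lambda>n. F_C C z (v n) - F_C C b (v n)) \<longlonglongrightarrow> q z" if z: "z \<in> C" for z
    proof -
      have "(\<lambda>n. (H_C C z (v n) - H_C C b (v n)) - (F_C C (v n) z - F_C C (v n) b))
            \<longlonglongrightarrow> h z - (F_C C y z - F_C C y b)"
        by (intro tendsto_intros vH[OF z] F_lim_num[OF z yK y0 vlim] F_lim_num[OF b yK y0 vlim])
      thus ?thesis by (simp add: H_C_def q_def rC)
    qed
    have nint2: "\<not> (\<exists>p\<in>C. \<forall>z\<in>C. q z = F_C C z p - F_C C b p)"
    proof
      assume "\<exists>p\<in>C. \<forall>z\<in>C. q z = F_C C z p - F_C C b p"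
      then obtain p where p: "p \<in> C" and qp: "\<And>z. z \<in> C \<Longrightarrow> q z = F_C C z p - F_C C b p" by blast
      have bK: "b \<in> closure C" "b \<noteq> 0" using b C_sub_K C_zero by auto
      have My: "M_C C y p > 0" using M_attain[OF p yK y0] by simp
      have Mb: "M_C C b p > 0" using M_attain[OF p bK] by simp
      define s where "s = M_C C b p / M_C C y p + 1"
      have s: "s > 0" using My Mb by (simp add: s_def add_pos_pos)
      have syK: "s *\<^sub>R y \<in> closure C" "s *\<^sub>R y \<noteq> 0" using K_scale s yK y0 by auto
      have w: "b + s *\<^sub>R y \<in> C" using CK_add[OF b syK(1)] .
      have "q (b + s *\<^sub>R y) \<le> q b"
        by (rule funk_invariant[OF yK yC vC vlim b qlim b]) (use s in auto)
      hence le: "F_C C (b + s *\<^sub>R y) p \<le> F_C C b p" using qp[OF w] qp[OF b] by simp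
      have "M_C C (s *\<^sub>R y) p \<le> M_C C (b + s *\<^sub>R y) p"
        using M_mono[OF p syK] bK by simp
      moreover have "M_C C (s *\<^sub>R y) p = s * M_C C y p" using M_scale_num[OF p s] .
      moreover have "s * M_C C y p > M_C C b p" using My by (simp add: s_def field_simps)
      ultimately have "M_C C b p < M_C C (b + s *\<^sub>R y) p" by linarith
      hence "F_C C b p < F_C C (b + s *\<^sub>R y) p" using Mb by (simp add: F_eq)
      thus False using le by simp
    qed
    have "q \<in> A_C C b y"
      unfolding A_C_def horofunction_def d_converges_def
      using vC qlim vlim nint2 by blast
    moreover have "\<forall>z\<in>C. h z = r_C C b y z + q z" by (simp add: q_def)
    ultimately show ?thesis using yfr by blast
  qed
  have part2: "\<forall>x y qx qy. x \<in> frontier C - {0} \<longrightarrow> y \<in> frontier C - {0} \<longrightarrow>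
          qx \<in> A_C C b x \<longrightarrow> qy \<in> A_C C b y \<longrightarrow>
          (\<forall>z\<in>C. h z = r_C C b x z + qx z) \<longrightarrow> (\<forall>z\<in>C. h z = r_C C b y z + qy z) \<longrightarrow>
          (\<exists>t>0. y = t *\<^sub>R x) \<and> (\<forall>z\<in>C. r_C C b x z = r_C C b y z) \<and> (\<forall>z\<in>C. qx z = qy z)"
  proof (intro allI impI)
    fix x y qx qy
    assume xf: "x \<in> frontier C - {0}" and yf: "y \<in> frontier C - {0}"
      and qxA: "qx \<in> A_C C b x" and qyA: "qy \<in> A_C C b y"
      and hx: "\<forall>z\<in>C. h z = r_C C b x z + qx z" and hy: "\<forall>z\<in>C. h z = r_C C b y z + qy z"
    have x: "x \<in> closure C" "x \<notin> C" "x \<noteq> 0" using xf frontier_C by auto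
    have y: "y \<in> closure C" "y \<notin> C" "y \<noteq> 0" using yf frontier_C by auto
    from qxA obtain wx where wxC: "\<And>n. wx n \<in> C" and wxlim: "wx \<longlonglongrightarrow> x"
      and qxl: "\<And>z. z \<in> C \<Longrightarrow> (\<lambda>n. F_C C z (wx n) - F_C C b (wx n)) \<longlonglongrightarrow> qx z"
      unfolding A_C_def d_converges_def by blast
    from qyA obtain wy where wyC: "\<And>n. wy n \<in> C" and wylim: "wy \<longlonglongrightarrow> y"
      and qyl: "\<And>z. z \<in> C \<Longrightarrow> (\<lambda>n. F_C C z (wy n) - F_C C b (wy n)) \<longlonglongrightarrow> qy z"
      unfolding A_C_def d_converges_def by blast
    have eq: "\<And>z. z \<in> C \<Longrightarrow> F_C C x z - F_C C x b + qx z = F_C C y z - F_C C y b + qy z"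
      using hx hy by (simp add: rC)
    define k0 where "k0 = qx b - qy b - F_C C x b + F_C C y b"
    have e1: "exp k0 *\<^sub>R x - y \<in> closure C"
      using unique_dir[OF b x y(1,3) wxC wxlim qxl wyC qyl eq] by (simp add: k0_def)
    have eq': "F_C C y z - F_C C y b + qy z = F_C C x z - F_C C x b + qx z" if "z \<in> C" for z
      using eq[OF that] by linarith
    have k: "qy b - qx b - F_C C y b + F_C C x b = - k0" unfolding k0_def by linarith
    have e2': "exp (qy b - qx b - F_C C y b + F_C C x b) *\<^sub>R y - x \<in> closure C"
      by (rule unique_dir[OF b y x(1,3) wyC wylim qyl wxC qxl eq'])
    have e2: "exp (- k0) *\<^sub>R y - x \<in> closure C"
      using e2' unfolding k .
    have "exp k0 *\<^sub>R (exp (- k0) *\<^sub>R y - x) \<in> closure C" using K_scale e2 by simp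
    hence "- (exp k0 *\<^sub>R x - y) \<in> closure C" by (simp add: algebra_simps exp_minus)
    hence "exp k0 *\<^sub>R x - y = 0" using no_lines e1 by blast
    hence yx: "y = exp k0 *\<^sub>R x" by simp
    have req: "r_C C b x z = r_C C b y z" if z: "z \<in> C" for z
    proof -
      have "M_C C x z > 0" "M_C C x b > 0" using M_attain[OF z x(1,3)] M_attain[OF b x(1,3)] by auto
      thus ?thesis unfolding rC F_eq yx using M_scale_num[OF z, of "exp k0" x] M_scale_num[OF b, of "exp k0" x]
        by (simp add: ln_mult)
    qed
    show "(\<exists>t>0. y = t *\<^sub>R x) \<and> (\<forall>z\<in>C. r_C C b x z = r_C C b y z) \<and> (\<forall>z\<in>C. qx z = qy z)"
    proof (intro conjI ballI)
      show "\<exists>t>0. y = t *\<^sub>R x" using yx by (intro exI[of _ "exp k0"]) simp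
    next
      fix z assume "z \<in> C"
      thus "r_C C b x z = r_C C b y z" by (rule req)
    next
      fix z assume z: "z \<in> C"
      have "h z = r_C C b x z + qx z" "h z = r_C C b y z + qy z" using hx hy z by auto
      thus "qx z = qy z" using req[OF z] by linarith
    qed
  qed
  show ?thesis by (rule conjI[OF part1 part2])
qed

end
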